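(* Let $a, b \ge 2$ be integers and let $R_{a,b} = \{C_{i,j} : 1 \le i \le a,\ 1 \le j \le b\}$ be the rectangular polyomino of size $n = ab$. Then on the $ab \times ab$ board, $$\mathrm{cp}_{\mathrm{fixed}}(R_{a,b}) = \left\lceil \frac{ab-a+1}{2a-1} \right\rceil \left\lceil \frac{ab-b+1}{2b-1} \right\rceil.$$
   Context: For integers $i,j$, $C_{i,j}$ denotes the unit square cell in column $i$ and row $j$ of the integer grid (columns numbered left to right, rows numbered top to bottom). A polyomino is a finite set of cells; its size is its number of cells. For a polyomino $\mathcal{P}$ of size $n$ the board is $\mathbb{B} = \{C_{i,j} : 1 \le i,j \le n\}$. The shift of $\mathcal{P}$ by integers $(c,d)$ is $\mathcal{P}+(c,d) = \{C_{x+c,y+d} : C_{x,y} \in \mathcal{P}\}$; a fixed copy of $\mathcal{P}$ is any shift of $\mathcal{P}$ (no rotations). A set of polyominoes is a valid arrangement if each is contained in $\mathbb{B}$ and they are pairwise disjoint. A fixed packing of $\mathcal{P}$ is a set of fixed copies of $\mathcal{P}$ forming a valid arrangement such that adding any further fixed copy of $\mathcal{P}$ yields an invalid arrangement. The clumsy fixed packing number $\mathrm{cp}_{\mathrm{fixed}}(\mathcal{P})$ is the minimum number of polyominoes in a fixed packing of $\mathcal{P}$ on the $n \times n$ board. *)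

theory Defs
  imports Complex_Main
begin

type_synonym cell = "int \<times> int"  (* (i, j) = C_{i,j}: column i, row j *)

definition shift :: "cell set \<Rightarrow> int \<Rightarrow> int \<Rightarrow> cell set" where
  "shift P c d = (\<lambda>(x, y). (x + c, y + d)) ` P"

definition board :: "nat \<Rightarrow> cell set" where
  "board n = {1..int n} \<times> {1..int n}"

definition valid_arrangement :: "nat \<Rightarrow> cell set set \<Rightarrow> bool" where
  "valid_arrangement n S \<longleftrightarrow>
     (\<forall>Q\<in>S. Q \<subseteq> board n) \<and> (\<forall>Q\<in>S. \<forall>R\<in>S. Q \<noteq> R \<longrightarrow> Q \<inter> R = {})"

definition fixed_packing :: "nat \<Rightarrow> cell set \<Rightarrow> cell set set \<Rightarrow> bool" where
  "fixed_packing n P S \<longleftrightarrow>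
     (\<forall>Q\<in>S. \<exists>c d. Q = shift P c d) \<and> valid_arrangement n S \<and>
     (\<forall>c d. shift P c d \<notin> S \<longrightarrow> \<not> valid_arrangement n (insert (shift P c d) S))"

definition cp_fixed :: "cell set \<Rightarrow> nat" where
  "cp_fixed P = (LEAST k. \<exists>S. fixed_packing (card P) P S \<and> card S = k)"

definition rect :: "nat \<Rightarrow> nat \<Rightarrow> cell set" where
  "rect a b = {1..int a} \<times> {1..int b}"

end

theory Submission
  imports Defs
begin

lemma shift_rect: "shift (rect a b) c d = {1+c..int a+c} \<times> {1+d..int b+d}"
  unfolding shift_def rect_def
proof (intro set_eqI iffI)
  fix z assume "z \<in> (\<lambda>(x, y). (x + c, y + d)) ` ({1..int a} \<times> {1..int b})"
  then show "z \<in> {1+c..int a+c} \<times> {1+d..int b+d}" by auto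
next
  fix z assume z: "z \<in> {1+c..int a+c} \<times> {1+d..int b+d}"
  obtain x y where "z = (x,y)" by force
  with z have "(x-c, y-d) \<in> {1..int a} \<times> {1..int b}" "z = (\<lambda>(x, y). (x + c, y + d)) (x-c,y-d)" by auto
  then show "z \<in> (\<lambda>(x, y). (x + c, y + d)) ` ({1..int a} \<times> {1..int b})" by blast
qed

lemma rect_inter:
  assumes "a \<ge> 1" "b \<ge> 1"
  shows "shift (rect a b) c d \<inter> shift (rect a b) c' d' \<noteq> {} \<longleftrightarrow> \<bar>c-c'\<bar> < int a \<and> \<bar>d-d'\<bar> < int b"
proof -
  have "shift (rect a b) c d \<inter> shift (rect a b) c' d' =
    ({1+c..int a+c} \<inter> {1+c'..int a+c'}) \<times> ({1+d..int b+d} \<inter> {1+d'..int b+d'})"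
    unfolding shift_rect by blast
  also have "\<dots> = {max (1+c) (1+c')..min (int a+c) (int a+c')} \<times> {max (1+d) (1+d')..min (int b+d) (int b+d')}"
    by simp
  finally show ?thesis by (auto simp: abs_if)
qed

lemma rect_ne:
  assumes "a \<ge> 1" "b \<ge> 1" shows "shift (rect a b) c d \<noteq> {}"
proof -
  have "(1+c,1+d) \<in> shift (rect a b) c d" using assms unfolding shift_rect by auto
  then show ?thesis by blast
qed

lemma rect_sub_board:
  assumes "a \<ge> 1" "b \<ge> 1"
  shows "shift (rect a b) c d \<subseteq> board n \<longleftrightarrow> 0 \<le> c \<and> c \<le> int n - int a \<and> 0 \<le> d \<and> d \<le> int n - int b"
proof
  assume h: "shift (rect a b) c d \<subseteq> board n"
  have "(1+c,1+d) \<in> shift (rect a b) c d" "(int a+c,int b+d) \<in> shift (rect a b) c d"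
    using assms unfolding shift_rect by auto
  with h show "0 \<le> c \<and> c \<le> int n - int a \<and> 0 \<le> d \<and> d \<le> int n - int b"
    unfolding board_def by auto
next
  assume "0 \<le> c \<and> c \<le> int n - int a \<and> 0 \<le> d \<and> d \<le> int n - int b"
  then show "shift (rect a b) c d \<subseteq> board n" unfolding shift_rect board_def by auto
qed

lemma rect_shift_inj:
  assumes "a \<ge> 1" "b \<ge> 1" "shift (rect a b) c d = shift (rect a b) c' d'"
  shows "c = c' \<and> d = d'"
proof -
  have "(1+c,1+d) \<in> shift (rect a b) c d" "(1+c',1+d') \<in> shift (rect a b) c' d'"
    using assms(1,2) unfolding shift_rect by auto
  then have "(1+c,1+d) \<in> shift (rect a b) c' d'" "(1+c',1+d') \<in> shift (rect a b) c d"
    using assms(3) by auto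
  then have "1+c'\<le> 1+c" "1+d' \<le> 1+d" "1+c \<le> 1+c'" "1+d \<le> 1+d'" unfolding shift_rect by auto
  then show ?thesis by simp
qed

definition cx :: "int \<Rightarrow> int \<Rightarrow> int \<Rightarrow> int" where
  "cx A M i = min (i*(2*A-1) + A - 1) (M-1)"

lemma oned:
  fixes A M p :: int
  assumes A: "A \<ge> 1" and M: "M \<ge> 1" and p1: "(p-1)*(2*A-1) \<le> M-1" and p2: "M \<le> p*(2*A-1)"
  shows oned_a: "0 \<le> i \<Longrightarrow> i \<le> p-1 \<Longrightarrow> 0 \<le> cx A M i \<and> cx A M i \<le> M-1"
    and oned_b: "0 \<le> i \<Longrightarrow> i \<le> p-1 \<Longrightarrow> 0 \<le> i' \<Longrightarrow> i' \<le> p-1 \<Longrightarrow> i \<noteq> i' \<Longrightarrow> \<bar>cx A M i - cx A M i'\<bar> \<ge> A"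
    and oned_c: "0 \<le> x \<Longrightarrow> x \<le> M-1 \<Longrightarrow> 0 \<le> x div (2*A-1) \<and> x div (2*A-1) \<le> p-1 \<and> \<bar>x - cx A M (x div (2*A-1))\<bar> < A"
    and oned_d: "0 \<le> i \<Longrightarrow> i \<le> p-1 \<Longrightarrow> i*(2*A-1) \<le> M-1"
    and oned_e: "\<bar>i*(2*A-1) - c\<bar> < A \<Longrightarrow> \<bar>i'*(2*A-1) - c\<bar> < A \<Longrightarrow> i = i'"
proof -
  define K where "K = 2*A-1"
  have K: "K \<ge> 1" "K \<ge> A" using A K_def by auto
  show d: "i*(2*A-1) \<le> M-1" if "0 \<le> i" "i \<le> p-1" for i
  proof -
    have "i*K \<le> (p-1)*K" using that K by (intro mult_right_mono) auto
    then show ?thesis using p1 K_def by simp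
  qed
  show "0 \<le> cx A M i \<and> cx A M i \<le> M-1" if "0 \<le> i" "i \<le> p-1"
  proof -
    have "0 \<le> i*K" using that K by simp
    then show ?thesis using M A K_def unfolding cx_def by simp
  qed
  have b: "cx A M i' - cx A M i \<ge> A" if "0 \<le> i" "i < i'" "i' \<le> p-1" for i i'
  proof -
    have "(i+1)*K \<le> i'*K" using that K by (intro mult_right_mono) auto
    moreover have "(i+1)*K \<le> (p-1)*K" using that K by (intro mult_right_mono) auto
    ultimately show ?thesis using p1 K_def K unfolding cx_def by (simp add: algebra_simps)
  qed
  show "\<bar>cx A M i - cx A M i'\<bar> \<ge> A" if "0 \<le> i" "i \<le> p-1" "0 \<le> i'" "i' \<le> p-1" "i \<noteq> i'"
  proof (cases "i < i'")
    case True then show ?thesis using b[of i i'] that by simp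
  next
    case False then have "i' < i" using that by simp
    then show ?thesis using b[of i' i] that by simp
  qed
  show "0 \<le> x div (2*A-1) \<and> x div (2*A-1) \<le> p-1 \<and> \<bar>x - cx A M (x div (2*A-1))\<bar> < A"
    if x: "0 \<le> x" "x \<le> M-1"
  proof -
    define i where "i = x div K"
    have i0: "0 \<le> i" using x K i_def by (simp add: pos_imp_zdiv_nonneg_iff)
    have dm: "x = i*K + x mod K" "0 \<le> x mod K" "x mod K < K" using K i_def by auto
    have "i < p"
    proof (rule ccontr)
      assume "\<not> i < p"
      then have "p*K \<le> i*K" using K by (intro mult_right_mono) auto
      then show False using dm p2 x unfolding K_def by linarith
    qed
    moreover have "\<bar>x - cx A M i\<bar> < A"
      using dm x K_def unfolding cx_def by (auto simp: abs_if min_def)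
    ultimately show ?thesis using i0 i_def K_def by simp
  qed
  show "i = i'" if "\<bar>i*(2*A-1) - c\<bar> < A" "\<bar>i'*(2*A-1) - c\<bar> < A"
  proof (rule ccontr)
    assume ne: "i \<noteq> i'"
    have "\<bar>i*K - i'*K\<bar> < K" using that K_def by simp
    moreover have "\<bar>i*K - i'*K\<bar> = \<bar>i - i'\<bar> * K" using K by (simp add: left_diff_distrib[symmetric] abs_mult)
    moreover have "\<bar>i - i'\<bar> * K \<ge> 1 * K" using ne K by (intro mult_right_mono) auto
    ultimately show False by simp
  qed
qed


lemma card_rect: "card (rect a b) = a*b"
  unfolding rect_def by (simp add: card_cartesian_product)

lemma finite_packing:
  assumes "valid_arrangement n S" shows "finite S"
proof -
  have "S \<subseteq> Pow (board n)" using assms unfolding valid_arrangement_def by auto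
  moreover have "finite (board n)" unfolding board_def by simp
  ultimately show ?thesis by (meson finite_Pow_iff finite_subset)
qed

lemma lower:
  fixes a b :: nat and p q :: int
  assumes a: "a \<ge> 1" and b: "b \<ge> 1"
    and fp: "fixed_packing (a*b) (rect a b) S"
    and M: "M = int (a*b) - int a + 1" and N: "N = int (a*b) - int b + 1"
    and p1: "(p-1)*(2*int a-1) \<le> M-1" and p2: "M \<le> p*(2*int a-1)"
    and q1: "(q-1)*(2*int b-1) \<le> N-1" and q2: "N \<le> q*(2*int b-1)"
  shows "nat p * nat q \<le> card S"
proof -
  define P where "P = rect a b"
  define A where "A = int a"
  define B where "B = int b"
  have M1: "M \<ge> 1" "N \<ge> 1" using M N a b by (auto simp: of_nat_mult)
  have A1: "A \<ge> 1" "B \<ge> 1" using a b A_def B_def by auto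
  note oA = oned[OF A1(1) M1(1) p1[folded A_def] p2[folded A_def]]
  note oB = oned[OF A1(2) M1(2) q1[folded B_def] q2[folded B_def]]
  define G where "G = {0..p-1} \<times> {0..q-1}"
  have val: "valid_arrangement (a*b) S" and shp: "\<forall>Q\<in>S. \<exists>c d. Q = shift P c d"
    and mx: "\<And>c d. shift P c d \<notin> S \<Longrightarrow> \<not> valid_arrangement (a*b) (insert (shift P c d) S)"
    using fp unfolding fixed_packing_def P_def by auto
  have fin: "finite S" using finite_packing[OF val] .
  have ex: "\<exists>Q. Q \<in> S \<and> Q \<inter> shift P (i*(2*A-1)) (j*(2*B-1)) \<noteq> {}" if ij: "(i,j) \<in> G" for i j
  proof -
    define X where "X = shift P (i*(2*A-1)) (j*(2*B-1))"
    have "i*(2*A-1) \<le> M-1" "j*(2*B-1) \<le> N-1" "0 \<le> i" "0 \<le> j"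
      using oA(4)[of i] oB(4)[of j] ij unfolding G_def by auto
    moreover have "0 \<le> 2*A-1" "0 \<le> 2*B-1" using A1 by auto
    ultimately have Xb: "X \<subseteq> board (a*b)" unfolding X_def P_def
      using rect_sub_board[OF a b] M N A_def B_def by simp
    have Xne: "X \<inter> X \<noteq> {}" unfolding X_def P_def using rect_ne[OF a b] by simp
    show ?thesis
    proof (cases "X \<in> S")
      case True then show ?thesis using Xne X_def by blast
    next
      case False
      then have "\<not> valid_arrangement (a*b) (insert X S)" using mx X_def by blast
      then have "\<exists>Q\<in>insert X S. \<exists>R\<in>insert X S. Q \<noteq> R \<and> Q \<inter> R \<noteq> {}"
        using val Xb unfolding valid_arrangement_def by auto
      then obtain Q R where QR: "Q \<in> insert X S" "R \<in> insert X S" "Q \<noteq> R" "Q \<inter> R \<noteq> {}"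
        by blast
      have dis: "\<And>Q R. Q \<in> S \<Longrightarrow> R \<in> S \<Longrightarrow> Q \<noteq> R \<Longrightarrow> Q \<inter> R = {}"
        using val unfolding valid_arrangement_def by blast
      show ?thesis
      proof (cases "Q = X")
        case True
        then have "R \<in> S" "R \<inter> X \<noteq> {}" using QR by auto
        then show ?thesis unfolding X_def by blast
      next
        case False
        then have Q: "Q \<in> S" using QR by simp
        show ?thesis
        proof (cases "R = X")
          case True
          then show ?thesis using Q QR unfolding X_def by blast
        next
          case False
          then have "R \<in> S" using QR by simp
          then show ?thesis using dis Q QR by blast
        qed
      qed
    qed
  qed
  define f where "f = (\<lambda>(i,j). SOME Q. Q \<in> S \<and> Q \<inter> shift P (i*(2*A-1)) (j*(2*B-1)) \<noteq> {})"
  have fS: "f (i,j) \<in> S \<and> f (i,j) \<inter> shift P (i*(2*A-1)) (j*(2*B-1)) \<noteq> {}" if "(i,j) \<in> G" for i j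
    using someI_ex[OF ex[OF that]] unfolding f_def by simp
  have "inj_on f G"
  proof (rule inj_onI)
    fix u v assume u: "u \<in> G" and v: "v \<in> G" and e: "f u = f v"
    obtain i j where u': "u = (i,j)" by force
    obtain i' j' where v': "v = (i',j')" by force
    have 1: "f u \<in> S" "f u \<inter> shift P (i*(2*A-1)) (j*(2*B-1)) \<noteq> {}" using fS u u' by auto
    have 2: "f u \<inter> shift P (i'*(2*A-1)) (j'*(2*B-1)) \<noteq> {}" using fS v v' e by auto
    obtain c d where Q: "f u = shift P c d" using shp 1 by blast
    have "\<bar>c - i*(2*A-1)\<bar> < A \<and> \<bar>d - j*(2*B-1)\<bar> < B"
      using 1(2) unfolding Q P_def by (simp add: rect_inter[OF a b] A_def B_def abs_minus_commute)
    moreover have "\<bar>c - i'*(2*A-1)\<bar> < A \<and> \<bar>d - j'*(2*B-1)\<bar> < B"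
      using 2 unfolding Q P_def by (simp add: rect_inter[OF a b] A_def B_def abs_minus_commute)
    ultimately have "i = i'" "j = j'" using oA(5)[of i c i'] oB(5)[of j d j'] by (auto simp: abs_minus_commute)
    then show "u = v" using u' v' by simp
  qed
  moreover have "f ` G \<subseteq> S" using fS by auto
  ultimately have "card G \<le> card S" using fin by (meson card_inj_on_le)
  moreover have "card G = nat p * nat q" unfolding G_def by (simp add: card_cartesian_product)
  ultimately show ?thesis by simp
qed

lemma upper:
  fixes a b :: nat and p q :: int
  assumes a: "a \<ge> 1" and b: "b \<ge> 1"
    and M: "M = int (a*b) - int a + 1" and N: "N = int (a*b) - int b + 1"
    and p1: "(p-1)*(2*int a-1) \<le> M-1" and p2: "M \<le> p*(2*int a-1)"
    and q1: "(q-1)*(2*int b-1) \<le> N-1" and q2: "N \<le> q*(2*int b-1)"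
  shows "\<exists>S. fixed_packing (a*b) (rect a b) S \<and> card S = nat p * nat q"
proof -
  define P where "P = rect a b"
  define A where "A = int a"
  define B where "B = int b"
  have M1: "M \<ge> 1" "N \<ge> 1" using M N a b by (auto simp: of_nat_mult)
  have A1: "A \<ge> 1" "B \<ge> 1" using a b A_def B_def by auto
  note oA = oned[OF A1(1) M1(1) p1[folded A_def] p2[folded A_def]]
  note oB = oned[OF A1(2) M1(2) q1[folded B_def] q2[folded B_def]]
  define G where "G = {0..p-1} \<times> {0..q-1}"
  define g where "g = (\<lambda>(i,j). shift P (cx A M i) (cx B N j))"
  define S where "S = g ` G"
  have gb: "g u \<subseteq> board (a*b)" if "u \<in> G" for u
  proof -
    obtain i j where u: "u = (i,j)" by force
    show ?thesis using oA(1)[of i] oB(1)[of j] that unfolding u G_def g_def P_def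
      using rect_sub_board[OF a b] M N A_def B_def by simp
  qed
  have gd: "g u \<inter> g v = {}" if "u \<in> G" "v \<in> G" "u \<noteq> v" for u v
  proof -
    obtain i j where u: "u = (i,j)" by force
    obtain i' j' where v: "v = (i',j')" by force
    have "\<not> (\<bar>cx A M i - cx A M i'\<bar> < A \<and> \<bar>cx B N j - cx B N j'\<bar> < B)"
    proof (cases "i = i'")
      case True then have "j \<noteq> j'" using that u v by auto
      then show ?thesis using oB(2)[of j j'] that u v unfolding G_def by auto
    next
      case False
      then show ?thesis using oA(2)[of i i'] that u v unfolding G_def by auto
    qed
    then show ?thesis using rect_inter[OF a b, of "cx A M i" "cx B N j" "cx A M i'" "cx B N j'"]
      unfolding u v g_def P_def A_def B_def by (simp only: prod.case) blast
  qed
  have "inj_on g G"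
  proof (rule inj_onI)
    fix u v assume "u \<in> G" "v \<in> G" "g u = g v"
    moreover have "g u \<inter> g u \<noteq> {}" unfolding g_def P_def using rect_ne[OF a b]
      by (auto split: prod.splits)
    ultimately show "u = v" using gd by blast
  qed
  then have card: "card S = nat p * nat q" unfolding S_def G_def
    by (simp add: card_image card_cartesian_product)
  have val: "valid_arrangement (a*b) S"
    unfolding valid_arrangement_def S_def using gb gd by blast
  have "fixed_packing (a*b) P S"
    unfolding fixed_packing_def
  proof (intro conjI allI impI val)
    show "\<forall>Q\<in>S. \<exists>c d. Q = shift P c d" unfolding S_def g_def by auto
    fix c d assume nS: "shift P c d \<notin> S"
    show "\<not> valid_arrangement (a * b) (insert (shift P c d) S)"
    proof
      assume v: "valid_arrangement (a * b) (insert (shift P c d) S)"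
      then have "shift P c d \<subseteq> board (a*b)" unfolding valid_arrangement_def by auto
      then have cd: "0 \<le> c" "c \<le> M-1" "0 \<le> d" "d \<le> N-1"
        using rect_sub_board[OF a b] M N unfolding P_def by auto
      define i where "i = c div (2*A-1)"
      define j where "j = d div (2*B-1)"
      have "(i,j) \<in> G" "\<bar>c - cx A M i\<bar> < A" "\<bar>d - cx B N j\<bar> < B"
        using oA(3)[OF cd(1,2)] oB(3)[OF cd(3,4)] unfolding G_def i_def j_def by auto
      then have "g (i,j) \<in> S" "g (i,j) \<inter> shift P c d \<noteq> {}"
        unfolding S_def g_def P_def using rect_inter[OF a b] A_def B_def by (auto simp: abs_minus_commute)
      moreover have "g (i,j) \<noteq> shift P c d" using nS \<open>g (i,j) \<in> S\<close> by auto
      ultimately show False using v unfolding valid_arrangement_def by blast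
    qed
  qed
  then show ?thesis using card P_def by blast
qed

theorem theorem2:
  fixes a b :: nat
  assumes "a \<ge> 2" and "b \<ge> 2"
  shows "real (cp_fixed (rect a b)) =
    real_of_int (\<lceil>(real a * real b - real a + 1) / (2 * real a - 1)\<rceil>
               * \<lceil>(real a * real b - real b + 1) / (2 * real b - 1)\<rceil>)"
proof -
  have a: "a \<ge> 1" and b: "b \<ge> 1" using assms by auto
  define M where "M = int (a*b) - int a + 1"
  define N where "N = int (a*b) - int b + 1"
  define p where "p = \<lceil>(real a * real b - real a + 1) / (2 * real a - 1)\<rceil>"
  define q where "q = \<lceil>(real a * real b - real b + 1) / (2 * real b - 1)\<rceil>"
  have ceil: "(k-1)*(2*int c-1) \<le> L-1 \<and> L \<le> k*(2*int c-1)"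
    if c: "c \<ge> 1" and k: "k = \<lceil>real_of_int L / (2 * real c - 1)\<rceil>" for k L c
  proof -
    have pos: "2 * real c - 1 > 0" using c by simp
    have "real_of_int k - 1 < real_of_int L / (2 * real c - 1)"
      "real_of_int L / (2 * real c - 1) \<le> real_of_int k"
      using k ceiling_correct by auto
    then have "(real_of_int k - 1) * (2 * real c - 1) < real_of_int L"
      "real_of_int L \<le> real_of_int k * (2 * real c - 1)"
      using pos by (simp_all add: pos_less_divide_eq pos_divide_le_eq)
    then have "real_of_int ((k-1)*(2*int c-1)) < real_of_int L"
      "real_of_int L \<le> real_of_int (k*(2*int c-1))" by simp_all
    then have "(k-1)*(2*int c-1) < L" "L \<le> k*(2*int c-1)" by linarith+
    then show ?thesis by simp
  qed
  have "real_of_int M = real a * real b - real a + 1" "real_of_int N = real a * real b - real b + 1"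
    unfolding M_def N_def by simp_all
  then have pq: "(p-1)*(2*int a-1) \<le> M-1 \<and> M \<le> p*(2*int a-1)"
    "(q-1)*(2*int b-1) \<le> N-1 \<and> N \<le> q*(2*int b-1)"
    using ceil[OF a, of p M] ceil[OF b, of q N] p_def q_def by auto
  have "M \<ge> 1" "N \<ge> 1" using a b M_def N_def by (auto simp: of_nat_mult)
  then have "0 < p*(2*int a-1)" "0 < q*(2*int b-1)" using pq by linarith+
  then have p0: "p \<ge> 0" "q \<ge> 0" using a b by (auto simp: zero_less_mult_iff)
  obtain S where S: "fixed_packing (a*b) (rect a b) S" "card S = nat p * nat q"
    using upper[OF a b M_def N_def] pq by blast
  have "cp_fixed (rect a b) = nat p * nat q"
    unfolding cp_fixed_def card_rect
  proof (rule Least_equality)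
    show "\<exists>S. fixed_packing (a * b) (rect a b) S \<and> card S = nat p * nat q" using S by blast
    fix k assume "\<exists>S. fixed_packing (a * b) (rect a b) S \<and> card S = k"
    then show "nat p * nat q \<le> k" using lower[OF a b _ M_def N_def] pq by blast
  qed
  then show ?thesis using p0 unfolding p_def q_def by simp
qed

end
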